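(* Let $\Gamma$ be a cocompact torsion-free Fuchsian group and $\mathcal{I}=\{I_\lambda\}_{\lambda\in\Lambda\setminus\{0\}}$ as in the context. Then: (a) every point $x\in\mathbb{S}^1$ is the limit point of an infinite nested sequence of intervals in $\mathcal{I}$ (i.e. there are intervals $I_{\lambda^1}\supset I_{\lambda^2}\supset\cdots$ in $\mathcal{I}$ with $\bigcap_k I_{\lambda^k}=\{x\}$); (b) given an interval $J\subset\mathbb{S}^1$ and $\epsilon>0$, there exists a finite covering of $J$ by intervals in $\mathcal{I}$ of length at most $\epsilon$.
   Context: $\mathbb{D}^2$ is the open unit disk with the Poincaré metric $d$, with boundary circle $\mathbb{S}^1$; lengths $|I|$ of intervals (arcs) $I\subset\mathbb{S}^1$ are taken with respect to the standard Euclidean (arc-length) measure. $\Lambda=\{\gamma(0):\gamma\in\Gamma\}$. For $\lambda\in\Lambda\setminus\{0\}$, $L_\lambda=\{z\in\mathbb{D}^2: d(z,0)=d(z,\lambda)\}$ is a geodesic, and $I_\lambda\subset\mathbb{S}^1$ is the shortest closed arc whose endpoints are the two endpoints of $L_\lambda$ on $\mathbb{S}^1$. *)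

theory Defs
  imports "HOL-Analysis.Analysis"
begin

(* Orientation-preserving isometries of the Poincare disk, parametrised by
   (u, a) with |u| = 1, |a| < 1:   z \<mapsto> u (z - a) / (1 - cnj a z).
   This parametrisation is a homeomorphism onto Aut(D) = PSU(1,1). *)
definition moeb :: "complex \<times> complex \<Rightarrow> complex \<Rightarrow> complex" where
  "moeb p z = fst p * (z - snd p) / (1 - cnj (snd p) * z)"

definition disk :: "complex set" where
  "disk = ball 0 1"

definition valid_param :: "complex \<times> complex \<Rightarrow> bool" where
  "valid_param p \<longleftrightarrow> cmod (fst p) = 1 \<and> cmod (snd p) < 1"

definition disk_subgroup :: "(complex \<times> complex) set \<Rightarrow> bool" where
  "disk_subgroup G \<longleftrightarrow>
     (\<forall>p\<in>G. valid_param p) \<and> (1, 0) \<in> G \<and>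
     (\<forall>p\<in>G. \<forall>q\<in>G. \<exists>r\<in>G. \<forall>z\<in>disk. moeb r z = moeb p (moeb q z)) \<and>
     (\<forall>p\<in>G. \<exists>q\<in>G. \<forall>z\<in>disk. moeb q (moeb p z) = z)"

definition fuchsian :: "(complex \<times> complex) set \<Rightarrow> bool" where
  "fuchsian G \<longleftrightarrow> disk_subgroup G \<and>
     (\<exists>e>0. \<forall>p\<in>G. p \<noteq> (1, 0) \<longrightarrow> dist p (1, 0) \<ge> e)"

definition cocompact :: "(complex \<times> complex) set \<Rightarrow> bool" where
  "cocompact G \<longleftrightarrow> (\<exists>K. compact K \<and> K \<subseteq> disk \<and> disk \<subseteq> (\<Union>p\<in>G. moeb p ` K))"

definition torsion_free :: "(complex \<times> complex) set \<Rightarrow> bool" where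
  "torsion_free G \<longleftrightarrow>
     (\<forall>p\<in>G. \<forall>n::nat. n > 0 \<and> (\<forall>z\<in>disk. (moeb p ^^ n) z = z) \<longrightarrow> p = (1, 0))"

definition pdist :: "complex \<Rightarrow> complex \<Rightarrow> real" where
  "pdist z w = 2 * artanh (cmod (z - w) / cmod (1 - cnj z * w))"

definition orbit0 :: "(complex \<times> complex) set \<Rightarrow> complex set" where
  "orbit0 G = (\<lambda>p. moeb p 0) ` G"

definition bisector :: "complex \<Rightarrow> complex set" where
  "bisector l = {z \<in> disk. pdist z 0 = pdist z l}"

definition bisector_ends :: "complex \<Rightarrow> complex set" where
  "bisector_ends l = closure (bisector l) \<inter> sphere 0 1"

definition Iarc :: "complex \<Rightarrow> complex set" where
  "Iarc l = (THE I. \<exists>\<alpha> \<beta>. \<alpha> \<le> \<beta> \<and> \<beta> - \<alpha> < pi \<and> {cis \<alpha>, cis \<beta>} = bisector_ends l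
                          \<and> I = cis ` {\<alpha>..\<beta>})"

definition arc_len :: "complex set \<Rightarrow> real" where
  "arc_len S = measure lborel {t \<in> {0..<2*pi}. cis t \<in> S}"

definition circle_interval :: "complex set \<Rightarrow> bool" where
  "circle_interval J \<longleftrightarrow> (\<exists>S::real set. is_interval S \<and> J = cis ` S)"

end

theory Submission
  imports Defs
begin


lemma nsq: "(cmod z)^2 = Re (z * cnj z)"
  by (metis Re_complex_of_real complex_norm_square)

lemma ident:
  "(cmod (1 - cnj z * l))^2 - (cmod (z - l))^2 = (1 - (cmod z)^2) * (1 - (cmod l)^2)"
proof -
  have "complex_of_real ((cmod (1 - cnj z * l))^2 - (cmod (z - l))^2)
     = (1 - cnj z * l) * cnj (1 - cnj z * l) - (z - l) * cnj (z - l)"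
    by (simp only: of_real_diff complex_norm_square)
  also have "\<dots> = (1 - z * cnj z) * (1 - l * cnj l)" by (simp add: algebra_simps)
  also have "\<dots> = complex_of_real ((1 - (cmod z)^2) * (1 - (cmod l)^2))"
    by (simp only: of_real_mult of_real_diff of_real_1 complex_norm_square)
  finally show ?thesis using of_real_eq_iff by blast
qed

lemma moeb_diff:
  assumes "cnj c * a \<noteq> 1" "cnj c * b \<noteq> 1"
  shows "moeb (u, c) a - moeb (u, c) b = u * (1 - c * cnj c) * (a - b) / ((1 - cnj c * a) * (1 - cnj c * b))"
  using assms unfolding moeb_def by (simp add: field_simps)

lemma moeb_den:
  assumes "cnj c * a \<noteq> 1" "cnj c * b \<noteq> 1" "u * cnj u = 1"
  shows "1 - cnj (moeb (u, c) a) * moeb (u, c) b = (1 - c * cnj c) * (1 - cnj a * b) / ((1 - c * cnj a) * (1 - cnj c * b))"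
proof -
  have h: "c * cnj a \<noteq> 1" using assms(1) by (metis complex_cnj_cnj complex_cnj_mult complex_cnj_one mult.commute)
  have cu: "cnj u * u = 1" using assms(3) by (simp add: mult.commute)
  have d1: "1 - c * cnj a \<noteq> 0" using h by simp
  have d2: "1 - cnj c * b \<noteq> 0" using assms(2) by simp
  have "cnj (moeb (u, c) a) * moeb (u, c) b = (cnj u * u) * ((cnj a - cnj c) * (b - c)) / ((1 - c * cnj a) * (1 - cnj c * b))"
    unfolding moeb_def by (simp add: mult.commute mult.left_commute)
  also have "\<dots> = ((cnj a - cnj c) * (b - c)) / ((1 - c * cnj a) * (1 - cnj c * b))" using cu by simp
  finally have e: "cnj (moeb (u, c) a) * moeb (u, c) b = ((cnj a - cnj c) * (b - c)) / ((1 - c * cnj a) * (1 - cnj c * b))" .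
  have dd: "(1 - c * cnj a) * (1 - cnj c * b) \<noteq> 0" using d1 d2 by simp
  have "1 - ((cnj a - cnj c) * (b - c)) / ((1 - c * cnj a) * (1 - cnj c * b))
     = ((1 - c * cnj a) * (1 - cnj c * b) - (cnj a - cnj c) * (b - c)) / ((1 - c * cnj a) * (1 - cnj c * b))"
    using dd by (simp add: diff_divide_distrib)
  also have "(1 - c * cnj a) * (1 - cnj c * b) - (cnj a - cnj c) * (b - c) = (1 - c * cnj c) * (1 - cnj a * b)"
    by (simp add: algebra_simps)
  finally show ?thesis unfolding e .
qed

lemma normsq_diff: "(cmod (x - l))^2 = (cmod x)^2 - 2 * Re (x * cnj l) + (cmod l)^2"
proof -
  have "complex_of_real ((cmod (x - l))^2) = (x - l) * cnj (x - l)"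
    by (simp only: complex_norm_square)
  also have "\<dots> = x * cnj x - (x * cnj l + cnj (x * cnj l)) + l * cnj l" by (simp add: algebra_simps)
  also have "x * cnj l + cnj (x * cnj l) = complex_of_real (2 * Re (x * cnj l))"
    by (simp only: complex_add_cnj of_real_mult of_real_numeral)
  finally have "complex_of_real ((cmod (x - l))^2) = complex_of_real ((cmod x)^2 - 2 * Re (x * cnj l) + (cmod l)^2)"
    by (simp only: of_real_add of_real_diff complex_norm_square)
  then show ?thesis using of_real_eq_iff by blast
qed

lemma cnj_mult_ne1: "cmod a < 1 \<Longrightarrow> cmod b < 1 \<Longrightarrow> cnj a * b \<noteq> 1"
proof
  assume "cmod a < 1" "cmod b < 1" "cnj a * b = 1"
  then have "cmod (cnj a * b) = 1" by simp
  moreover have "cmod (cnj a * b) < 1" using \<open>cmod a < 1\<close> \<open>cmod b < 1\<close>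
    by (simp add: norm_mult) (metis mult_strict_mono' norm_ge_zero mult_1_left less_le_trans mult_less_cancel_left1 not_less)
  ultimately show False by simp
qed

lemma moeb_inv:
  assumes vp: "valid_param p" and a: "cmod a < 1" and b: "cmod b < 1"
  shows "cmod (moeb p a - moeb p b) / cmod (1 - cnj (moeb p a) * moeb p b) = cmod (a - b) / cmod (1 - cnj a * b)"
proof -
  obtain u c where p: "p = (u, c)" by fastforce
  have u: "cmod u = 1" and c: "cmod c < 1" using vp p by (auto simp: valid_param_def)
  have uu: "u * cnj u = 1" using u complex_norm_square[of u] by simp
  have ca: "cnj c * a \<noteq> 1" and cb: "cnj c * b \<noteq> 1" using cnj_mult_ne1 a b c by auto
  have n1: "cmod (1 - c * cnj a) = cmod (1 - cnj c * a)"
    by (metis complex_cnj_cnj complex_cnj_diff complex_cnj_mult complex_cnj_one complex_mod_cnj)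
  have cc: "1 - c * cnj c = complex_of_real (1 - (cmod c)^2)"
    by (simp only: of_real_diff of_real_1 complex_norm_square)
  have pos: "1 - (cmod c)^2 > 0" using c by (simp add: abs_square_less_1)
  have d1: "cmod (1 - cnj c * a) > 0" "cmod (1 - cnj c * b) > 0" using ca cb by auto
  have "cmod (moeb p a - moeb p b) / cmod (1 - cnj (moeb p a) * moeb p b)
     = ((1 - (cmod c)^2) * cmod (a - b) / (cmod (1 - cnj c * a) * cmod (1 - cnj c * b))) /
       ((1 - (cmod c)^2) * cmod (1 - cnj a * b) / (cmod (1 - cnj c * a) * cmod (1 - cnj c * b)))"
    unfolding p moeb_diff[OF ca cb] moeb_den[OF ca cb uu]
    unfolding norm_mult norm_divide n1 u cc norm_of_real using pos by simp
  also have "\<dots> = cmod (a - b) / cmod (1 - cnj a * b)"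
    using pos d1 by (simp add: divide_simps)
  finally show ?thesis .
qed

lemma moeb0: "valid_param p \<Longrightarrow> cmod (moeb p 0) < 1"
  by (cases p) (simp add: moeb_def valid_param_def norm_mult)

lemma orbit0_disk: "disk_subgroup G \<Longrightarrow> l \<in> orbit0 G \<Longrightarrow> cmod l < 1"
  unfolding orbit0_def disk_subgroup_def using moeb0 by auto

lemma cocompact_bound:
  assumes "cocompact G"
  obtains K s where "0 \<le> s" "s < 1" "\<forall>k\<in>K. cmod k \<le> s" "disk \<subseteq> (\<Union>p\<in>G. moeb p ` K)"
proof -
  obtain K where K: "compact K" "K \<subseteq> disk" "disk \<subseteq> (\<Union>p\<in>G. moeb p ` K)"
    using assms unfolding cocompact_def by blast
  have "K \<noteq> {}" using K(3) unfolding disk_def by fastforce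
  have "compact (norm ` K)" using K(1) by (intro compact_continuous_image continuous_intros)
  then obtain m where m: "m \<in> norm ` K" "\<forall>y\<in>norm ` K. y \<le> m"
    using compact_attains_sup \<open>K \<noteq> {}\<close> by blast
  have "m < 1" using m(1) K(2) unfolding disk_def by auto
  show ?thesis
    apply (rule that[of "max 0 m" K])
    using m \<open>m < 1\<close> K(3) by auto
qed

lemma key:
  assumes cc: "cocompact G" and sub: "disk_subgroup G" and x: "cmod x = 1" and eta: "\<eta> > 0"
  shows "\<exists>l\<in>orbit0 G. Re (x * cnj l) > (cmod l)^2 \<and> 1 - (cmod l)^2 < \<eta>"
proof -
  obtain K s where s: "0 \<le> s" "s < 1" "\<forall>k\<in>K. cmod k \<le> s" and cov: "disk \<subseteq> (\<Union>p\<in>G. moeb p ` K)"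
    by (rule cocompact_bound[OF cc])
  define d where "d = min ((1 - s^2) / 8) (\<eta> * (1 - s)^2 / 2)"
  have s2: "s^2 < 1" using s by (simp add: abs_square_less_1)
  have p1: "(1 - s^2) / 8 > 0" using s2 by simp
  have p2: "\<eta> * (1 - s)^2 / 2 > 0" using eta s by simp
  have m1: "d \<le> (1 - s^2) / 8" unfolding d_def by (rule min.cobounded1)
  have m2: "d \<le> \<eta> * (1 - s)^2 / 2" unfolding d_def by (rule min.cobounded2)
  have dpos: "d > 0" unfolding d_def using p1 p2 by simp
  have d1: "d < (1 - s^2) / 4" using m1 p1 by linarith
  have d2: "d < \<eta> * (1 - s)^2" using m2 p2 by linarith
  have "(1 - s^2)/4 \<le> 1/4" by simp
  then have dle: "d < 1" using d1 by linarith
  define t where "t = sqrt (1 - d)"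
  have t0: "0 \<le> t" "t < 1" using dpos dle by (auto simp: t_def)
  have tt: "t^2 = 1 - d" using dle by (simp add: t_def)
  define z where "z = complex_of_real t * x"
  have nz: "cmod z = t" using x t0 by (simp add: z_def norm_mult)
  have "z \<in> disk" using nz t0 by (simp add: disk_def)
  then obtain p k where pG: "p \<in> G" and kK: "k \<in> K" and zk: "z = moeb p k" using cov by blast
  have vp: "valid_param p" using sub pG by (simp add: disk_subgroup_def)
  define l where "l = moeb p 0"
  have lorb: "l \<in> orbit0 G" using pG by (simp add: orbit0_def l_def)
  have l1: "cmod l < 1" using moeb0[OF vp] by (simp add: l_def)
  have k1: "cmod k < 1" using kK s by force
  have zl: "cnj z * l \<noteq> 1" using cnj_mult_ne1 l1 nz t0 by simp
  define A where "A = cmod (1 - cnj z * l)"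
  have Apos: "A > 0" using zl by (simp add: A_def)
  have "cmod (z - l) / A = cmod (k - 0) / cmod (1 - cnj k * 0)"
    unfolding A_def zk l_def by (rule moeb_inv[OF vp k1]) simp
  then have "cmod (z - l) / A \<le> s" using kK s by simp
  then have hz: "cmod (z - l) \<le> s * A" using Apos by (simp add: divide_simps)
  have ID: "A^2 - (cmod (z - l))^2 = d * (1 - (cmod l)^2)"
    using ident[of z l] nz tt by (simp add: A_def)
  have xx: "cnj x * x = 1" using x complex_norm_square[of x] by (simp add: mult.commute)
  have "1 - cnj z * l = cnj x * (x - complex_of_real t * l)"
    using xx by (simp add: z_def algebra_simps)
  then have Ax: "A = cmod (x - complex_of_real t * l)"
    using x by (simp add: A_def norm_mult)
  have "cmod (complex_of_real t * l) \<le> t" using l1 t0 by (simp add: norm_mult mult_left_le)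
  then have A1: "A \<ge> 1 - t" using Ax x norm_triangle_ineq2[of x "complex_of_real t * l"] by simp
  have "1 - cnj z * l = (1 - cnj z * z) + cnj z * (z - l)" by (simp add: algebra_simps)
  then have "A \<le> cmod (1 - cnj z * z) + cmod (cnj z * (z - l))"
    unfolding A_def by (metis norm_triangle_ineq)
  also have "cmod (1 - cnj z * z) = d"
  proof -
    have "1 - cnj z * z = complex_of_real (1 - t^2)"
      using complex_norm_square[of z] nz by (simp add: mult.commute)
    then show ?thesis using tt dpos by simp
  qed
  also have "cmod (cnj z * (z - l)) \<le> s * A"
  proof -
    have "t * cmod (z - l) \<le> cmod (z - l)" using t0 by (simp add: mult_left_le_one_le)
    then show ?thesis using hz nz by (simp add: norm_mult)
  qed
  finally have "A * (1 - s) \<le> d" by (simp add: algebra_simps)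
  then have Au: "A \<le> d / (1 - s)" using s by (simp add: field_simps)
  have "0 \<le> (cmod (z - l))^2" by simp
  then have "d * (1 - (cmod l)^2) \<le> A^2" using ID by linarith
  also have "A^2 \<le> (d / (1 - s))^2" using Au Apos by (simp add: power_mono)
  finally have "d * (1 - (cmod l)^2) \<le> d * (d / (1 - s)^2)" by (simp add: power_divide power2_eq_square)
  then have "1 - (cmod l)^2 \<le> d / (1 - s)^2" using dpos mult_le_cancel_left_pos by blast
  also have "\<dots> < \<eta>" using d2 s by (simp add: divide_simps)
  finally have part2: "1 - (cmod l)^2 < \<eta>" .
  have "cmod (x - l) \<le> cmod (x - complex_of_real t * l) + cmod (complex_of_real t * l - l)"
    using norm_triangle_ineq[of "x - complex_of_real t * l" "complex_of_real t * l - l"] by simp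
  also have "cmod (complex_of_real t * l - l) = (1 - t) * cmod l"
  proof -
    have "complex_of_real t * l - l = - (complex_of_real (1 - t) * l)" by (simp add: algebra_simps)
    moreover have "cmod (complex_of_real (1 - t)) = 1 - t" using t0 by (simp only: norm_of_real)
    ultimately show ?thesis by (simp only: norm_minus_cancel norm_mult)
  qed
  also have "(1 - t) * cmod l \<le> 1 - t" using l1 t0 by (simp add: mult_left_le_one_le mult.commute)
  finally have "cmod (x - l) \<le> 2 * A" using Ax A1 by simp
  then have xl: "(cmod (x - l))^2 \<le> 4 * A^2"
  proof -
    have "(cmod (x - l))^2 \<le> (2 * A)^2" by (rule power_mono[OF \<open>cmod (x - l) \<le> 2 * A\<close> norm_ge_zero])
    then show ?thesis by (simp add: power_mult_distrib)
  qed
  have "(cmod (z - l))^2 \<le> (s * A)^2" using hz by (simp add: power_mono)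
  then have "d * (1 - (cmod l)^2) \<ge> (1 - s^2) * A^2" using ID by (simp add: algebra_simps power_mult_distrib)
  moreover have "(1 - s^2) * A^2 > 4 * d * A^2" using d1 Apos by simp
  ultimately have "d * (1 - (cmod l)^2) > d * (4 * A^2)" by simp
  then have "1 - (cmod l)^2 > 4 * A^2" using dpos by simp
  with xl have "(cmod (x - l))^2 < 1 - (cmod l)^2" by simp
  then have "Re (x * cnj l) > (cmod l)^2" using normsq_diff[of x l] x by simp
  then show ?thesis using lorb part2 by blast
qed



lemma artanh_inj:
  fixes x y :: real
  assumes "0 \<le> x" "x < 1" "0 \<le> y" "y < 1" "artanh x = artanh y"
  shows "x = y"
proof -
  have "ln ((1 + x) / (1 - x)) = ln ((1 + y) / (1 - y))"
    using assms(5) by (simp add: artanh_def)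
  then have "(1 + x) / (1 - x) = (1 + y) / (1 - y)"
    using assms by (subst (asm) ln_inj_iff) auto
  then have "(1 + x) * (1 - y) = (1 + y) * (1 - x)" using assms by (simp add: field_simps)
  then show ?thesis by (simp add: algebra_simps)
qed

lemma bisector_eq:
  "bisector l = {z. cmod z < 1 \<and> (cmod (z - l))^2 = (cmod z)^2 * (1 - (cmod l)^2)}"
  if l1: "cmod l < 1"
proof -
  have "pdist z 0 = pdist z l \<longleftrightarrow> (cmod (z - l))^2 = (cmod z)^2 * (1 - (cmod l)^2)"
    if z1: "cmod z < 1" for z
  proof -
    define A where "A = cmod (1 - cnj z * l)"
    define N where "N = cmod (z - l)"
    have ID: "A^2 - N^2 = (1 - (cmod z)^2) * (1 - (cmod l)^2)"
      using ident[of z l] by (simp add: A_def N_def)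
    have pz: "1 - (cmod z)^2 > 0" using z1 by (simp add: abs_square_less_1)
    have pl: "1 - (cmod l)^2 > 0" using l1 by (simp add: abs_square_less_1)
    have "A^2 > N^2" using ID pz pl by (smt (verit) mult_pos_pos)
    then have NA: "N < A" by (rule power2_less_imp_less) (simp add: A_def)
    have N0: "N \<ge> 0" by (simp add: N_def)
    then have A0: "A > 0" using NA by linarith
    have "pdist z 0 = pdist z l \<longleftrightarrow> artanh (cmod z) = artanh (N / A)"
      by (simp add: pdist_def A_def N_def)
    also have "\<dots> \<longleftrightarrow> cmod z = N / A"
      using artanh_inj[of "cmod z" "N / A"] z1 NA N0 A0 by auto
    also have "\<dots> \<longleftrightarrow> cmod z * A = N" using A0 by (auto simp: field_simps)
    also have "\<dots> \<longleftrightarrow> (cmod z)^2 * A^2 = N^2"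
    proof
      assume "cmod z * A = N" then show "(cmod z)^2 * A^2 = N^2" by (metis power_mult_distrib)
    next
      assume "(cmod z)^2 * A^2 = N^2"
      then have "(cmod z * A)^2 = N^2" by (simp add: power_mult_distrib)
      then show "cmod z * A = N" using N0 A0 by (simp add: power2_eq_iff_nonneg)
    qed
    also have "\<dots> \<longleftrightarrow> (1 - (cmod z)^2) * (N^2 - (cmod z)^2 * (1 - (cmod l)^2)) = 0"
    proof -
      have A2: "A^2 = N^2 + (1 - (cmod z)^2) * (1 - (cmod l)^2)" using ID by simp
      have "(cmod z)^2 * A^2 - N^2 = - ((1 - (cmod z)^2) * (N^2 - (cmod z)^2 * (1 - (cmod l)^2)))"
        unfolding A2 by (simp add: algebra_simps)
      then show ?thesis by (smt (verit))
    qed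
    also have "\<dots> \<longleftrightarrow> N^2 = (cmod z)^2 * (1 - (cmod l)^2)" using pz by simp
    finally show ?thesis by (simp add: N_def)
  qed
  then show ?thesis unfolding bisector_def disk_def by auto
qed

lemma arc_set:
  assumes ab: "a \<le> b" "b - a < pi"
  shows "cis ` {a..b} = {y. cmod y = 1 \<and> Re (y * cnj (cis a + cis b)) \<ge> (cmod (cis a + cis b))^2 / 2}"
proof -
  define h where "h = (b - a) / 2"
  define c where "c = (a + b) / 2"
  have h0: "0 \<le> h" "h < pi / 2" using ab by (auto simp: h_def)
  have ch: "cos h > 0" using h0 by (intro cos_gt_zero_pi) auto
  have "cis a = cis c * cis (-h)" "cis b = cis c * cis h"
    by (simp_all add: cis_mult c_def h_def field_simps)
  then have sum: "cis a + cis b = complex_of_real (2 * cos h) * cis c"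
    by (simp add: complex_eq_iff cis.ctr algebra_simps)
  have nsum: "cmod (cis a + cis b) = 2 * cos h" using ch by (simp add: sum norm_mult)
  have "\<And>y. Re (y * cnj (cis a + cis b)) = 2 * cos h * Re (y * cis (- c))"
    by (simp add: sum cis_cnj algebra_simps)
  note ReE = this
  have eqv: "\<And>R. (2 * cos h)^2 / 2 \<le> 2 * cos h * R \<longleftrightarrow> cos h \<le> R"
  proof -
    fix R
    have "(2 * cos h)^2 / 2 = 2 * cos h * cos h" by (simp add: power2_eq_square)
    then show "(2 * cos h)^2 / 2 \<le> 2 * cos h * R \<longleftrightarrow> cos h \<le> R"
      using ch mult_le_cancel_left_pos[of "2 * cos h" "cos h" R] by simp
  qed
  have set: "{y. cmod y = 1 \<and> Re (y * cnj (cis a + cis b)) \<ge> (cmod (cis a + cis b))^2 / 2}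
      = {y. cmod y = 1 \<and> Re (y * cis (- c)) \<ge> cos h}"
    by (simp only: nsum ReE eqv)
  show ?thesis unfolding set
  proof safe
    fix t assume t: "t \<in> {a..b}"
    show "cmod (cis t) = 1" by simp
    have "\<bar>t - c\<bar> \<le> h" using t unfolding c_def h_def by (auto simp: abs_if field_simps)
    then have "cos h \<le> cos \<bar>t - c\<bar>" using h0 by (intro cos_monotone_0_pi_le) auto
    also have "cos \<bar>t - c\<bar> = Re (cis t * cis (- c))" by (simp add: cis_mult)
    finally show "cos h \<le> Re (cis t * cis (- c))" .
  next
    fix y assume y: "cmod y = 1" "cos h \<le> Re (y * cis (- c))"
    define w where "w = y * cis (- c)"
    have w1: "cmod w = 1" using y by (simp add: w_def norm_mult)
    define p where "p = Arg w"
    have "w \<noteq> 0" using w1 by auto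
    then have wp: "w = cis p" using cis_Arg[of w] w1 by (simp add: p_def sgn_div_norm)
    have pb: "- pi < p" "p \<le> pi" using Arg_bounded by (auto simp: p_def)
    have "cos h \<le> cos \<bar>p\<bar>" using y(2) by (simp add: w_def[symmetric] wp)
    moreover have "\<bar>p\<bar> \<le> pi" "h \<le> pi" using pb h0 by auto
    ultimately have "\<bar>p\<bar> \<le> h" using cos_mono_le_eq[OF h0(1) \<open>h \<le> pi\<close> abs_ge_zero \<open>\<bar>p\<bar> \<le> pi\<close>] by blast
    then have "c + p \<in> {a..b}" unfolding c_def h_def by (auto simp: abs_if field_simps split: if_splits)
    moreover have "y = cis (c + p)"
    proof -
      have "y = w * cis c" by (simp add: w_def cis_mult)
      then show ?thesis by (simp add: wp cis_mult add.commute)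
    qed
    ultimately show "y \<in> cis ` {a..b}" by blast
  qed
qed



lemma ends_sub:
  assumes l0: "l \<noteq> 0" and l1: "cmod l < 1" and sg: "\<sigma> = 1 \<or> \<sigma> = -1"
  shows "(l / cmod l) * Complex (cmod l) (\<sigma> * sqrt (1 - (cmod l)^2)) \<in> closure (bisector l)"
proof -
  define r where "r = cmod l"
  have r0: "0 < r" "r < 1" using l0 l1 by (auto simp: r_def)
  define u where "u = l / complex_of_real r"
  have u1: "cmod u = 1" using r0 by (simp add: u_def norm_divide r_def)
  define g where "g = (\<lambda>h::real. 2 * (r - h) / r - 1 - (r - h)^2)"
  define Z where "Z = (\<lambda>h. u * Complex (r - h) (\<sigma> * sqrt (g h)))"
  have rne: "r \<noteq> 0" using r0 by simp
  have g0: "g 0 = 1 - r^2" unfolding g_def using rne by simp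
  have gpos: "g 0 > 0" using r0 g0 by (simp add: abs_square_less_1)
  have gt: "(g \<longlongrightarrow> g 0) (at_right 0)" unfolding g_def using rne by (intro tendsto_intros) auto
  have ev1: "eventually (\<lambda>h. g h > 0) (at_right 0)" using order_tendstoD(1)[OF gt gpos] .
  have ev2: "eventually (\<lambda>h. h \<in> {0<..<r}) (at_right 0)" using eventually_at_right_real r0 by blast
  have ev: "eventually (\<lambda>h. Z h \<in> bisector l) (at_right 0)"
    using ev1 ev2
  proof eventually_elim
    case (elim h)
    have sq: "(sqrt (g h))^2 = g h" using elim by simp
    have s2: "\<sigma>^2 = 1" using sg by auto
    have nZ: "(cmod (Z h))^2 = (r - h)^2 + g h"
      unfolding Z_def by (simp add: norm_mult u1 cmod_power2 power_mult_distrib sq s2)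
    have e1: "(r - h)^2 + g h = 2 * (r - h) / r - 1" by (simp add: g_def)
    have "2 * (r - h) / r - 1 < 1" using elim r0 by (simp add: field_simps)
    then have "(cmod (Z h))^2 < 1" using nZ e1 by simp
    then have Z1: "cmod (Z h) < 1" by (metis abs_norm_cancel abs_square_less_1)
    have lu: "l = u * complex_of_real r" using r0 by (simp add: u_def)
    have "Z h - l = u * Complex (- h) (\<sigma> * sqrt (g h))"
      unfolding Z_def lu by (simp add: complex_eq_iff algebra_simps)
    then have nZl: "(cmod (Z h - l))^2 = h^2 + g h"
      by (simp add: norm_mult u1 cmod_power2 power_mult_distrib sq s2)
    have "h^2 + g h = (2 * (r - h) / r - 1) * (1 - r^2)"
      using r0 by (simp add: g_def field_simps power2_eq_square)
    then have "(cmod (Z h - l))^2 = (cmod (Z h))^2 * (1 - (cmod l)^2)"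
      using nZl nZ e1 by (simp add: r_def)
    then show ?case using Z1 bisector_eq[OF l1] by simp
  qed
  have "(Z \<longlongrightarrow> u * Complex (r - 0) (\<sigma> * sqrt (g 0))) (at_right 0)"
    unfolding Z_def by (intro tendsto_intros gt continuous_intros tendsto_Complex)
  then have "(Z \<longlongrightarrow> (l / cmod l) * Complex (cmod l) (\<sigma> * sqrt (1 - (cmod l)^2))) (at_right 0)"
    by (simp add: g0 u_def r_def)
  moreover have "eventually (\<lambda>h. Z h \<in> closure (bisector l)) (at_right 0)"
    using ev by eventually_elim (use closure_subset in blast)
  ultimately show ?thesis
    using Lim_in_closed_set[OF closed_closure] trivial_limit_at_right_real by blast
qed



definition P :: "complex \<Rightarrow> real \<Rightarrow> complex" where
  "P l \<sigma> = (l / cmod l) * Complex (cmod l) (\<sigma> * sqrt (1 - (cmod l)^2))"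

lemma P_norm: assumes "l \<noteq> 0" "cmod l < 1" "\<sigma> = 1 \<or> \<sigma> = -1" shows "cmod (P l \<sigma>) = 1"
proof -
  have l2: "(cmod l)^2 \<le> 1" using assms by (simp add: abs_square_le_1 less_imp_le)
  have sq: "(sqrt (1 - (cmod l)^2))^2 = 1 - (cmod l)^2" using l2 by simp
  have s2: "\<sigma>^2 = 1" using assms(3) by auto
  have "(cmod (Complex (cmod l) (\<sigma> * sqrt (1 - (cmod l)^2))))^2 = (cmod l)^2 + \<sigma>^2 * (sqrt (1 - (cmod l)^2))^2"
    by (simp only: cmod_power2 complex.sel power_mult_distrib)
  also have "\<dots> = 1" unfolding sq s2 by simp
  finally have "(cmod (Complex (cmod l) (\<sigma> * sqrt (1 - (cmod l)^2))))^2 = 1" .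
  then have "cmod (Complex (cmod l) (\<sigma> * sqrt (1 - (cmod l)^2))) = 1"
    by (metis abs_norm_cancel power2_eq_1_iff real_sqrt_abs real_sqrt_one)
  then show ?thesis using assms by (simp add: P_def norm_mult norm_divide)
qed

lemma ends_eq:
  assumes l0: "l \<noteq> 0" and l1: "cmod l < 1"
  shows "bisector_ends l = {P l 1, P l (-1)}"
proof
  show "{P l 1, P l (-1)} \<subseteq> bisector_ends l"
    unfolding bisector_ends_def using ends_sub[OF l0 l1, of 1] ends_sub[OF l0 l1, of "-1"]
      P_norm[OF l0 l1, of 1] P_norm[OF l0 l1, of "-1"] by (auto simp: P_def)
next
  define r where "r = cmod l"
  have r0: "0 < r" "r < 1" using l0 l1 by (auto simp: r_def)
  define u where "u = l / complex_of_real r"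
  have u1: "cmod u = 1" using r0 by (simp add: u_def norm_divide r_def)
  have uu: "u * cnj u = 1" using u1 complex_norm_square[of u] by simp
  have clo: "closure (bisector l) \<subseteq> {z. cmod z \<le> 1 \<and> (cmod (z - l))^2 = (cmod z)^2 * (1 - (cmod l)^2)}"
  proof (rule closure_minimal)
    show "bisector l \<subseteq> {z. cmod z \<le> 1 \<and> (cmod (z - l))^2 = (cmod z)^2 * (1 - (cmod l)^2)}"
      using bisector_eq[OF l1] by auto
    show "closed {z. cmod z \<le> 1 \<and> (cmod (z - l))^2 = (cmod z)^2 * (1 - (cmod l)^2)}"
      by (intro closed_Collect_conj closed_Collect_le closed_Collect_eq continuous_intros)
  qed
  show "bisector_ends l \<subseteq> {P l 1, P l (-1)}"
  proof
    fix y assume "y \<in> bisector_ends l"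
    then have y1: "cmod y = 1" and ye: "(cmod (y - l))^2 = (cmod y)^2 * (1 - (cmod l)^2)"
      using clo unfolding bisector_ends_def by auto
    have Re1: "Re (y * cnj l) = r^2" using ye y1 normsq_diff[of y l] by (simp add: r_def)
    define w where "w = y * cnj u"
    have yw: "y = u * w" using uu by (simp add: w_def mult.commute mult.left_commute)
    have w1: "cmod w = 1" using y1 u1 by (simp add: w_def norm_mult)
    have "y * cnj l = complex_of_real r * w" using r0 by (simp add: w_def u_def r_def)
    then have Rw: "Re w = r" using Re1 r0 by (simp add: power2_eq_square)
    have "(Im w)^2 = 1 - r^2" using w1 Rw cmod_power2[of w] by simp
    then have "\<bar>Im w\<bar> = sqrt (1 - r^2)" by (metis real_sqrt_abs)
    then have "Im w = sqrt (1 - r^2) \<or> Im w = - sqrt (1 - r^2)" by auto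
    then have "w = Complex r (1 * sqrt (1 - r^2)) \<or> w = Complex r ((-1) * sqrt (1 - r^2))"
      using Rw by (auto simp: complex_eq_iff)
    then show "y \<in> {P l 1, P l (-1)}" unfolding yw P_def u_def r_def by auto
  qed
qed

lemma pair_sum: "{a, b} = {p, q} \<Longrightarrow> p \<noteq> q \<Longrightarrow> a + b = (p + q :: complex)"
  by (metis doubleton_eq_iff add.commute)

lemma Iarc_char:
  assumes l0: "l \<noteq> 0" and l1: "cmod l < 1"
  shows "Iarc l = cis ` {Arg l - arccos (cmod l) .. Arg l + arccos (cmod l)}"
    and "Iarc l = {y. cmod y = 1 \<and> Re (y * cnj l) \<ge> (cmod l)^2}"
proof -
  define r where "r = cmod l"
  have r0: "0 < r" "r < 1" using l0 l1 by (auto simp: r_def)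
  define \<phi> where "\<phi> = arccos r"
  define \<alpha> where "\<alpha> = Arg l - \<phi>"
  define \<beta> where "\<beta> = Arg l + \<phi>"
  have ph: "0 < \<phi>" "\<phi> < pi" using arccos_lt_bounded[of r] r0 by (auto simp: \<phi>_def)
  have cph: "cos \<phi> = r" using r0 by (simp add: \<phi>_def)
  have sph: "sin \<phi> = sqrt (1 - r^2)" using r0 by (simp add: \<phi>_def sin_arccos_abs)
  have "\<phi> \<le> pi / 2" using r0 arccos_le_pi2[of r] by (simp add: \<phi>_def)
  moreover have "\<phi> \<noteq> pi / 2"
  proof
    assume "\<phi> = pi / 2"
    then have "cos \<phi> = 0" by (simp only: cos_pi_half)
    with cph r0 show False by simp
  qed
  ultimately have ph2: "\<phi> < pi / 2" by simp
  have cisA: "cis (Arg l) = l / complex_of_real r" using cis_Arg[OF l0] by (simp add: Complex.sgn_eq r_def)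
  have c1: "cis \<phi> = Complex r (1 * sqrt (1 - r^2))" by (simp add: complex_eq_iff cph sph)
  have c2: "cis (- \<phi>) = Complex r ((-1) * sqrt (1 - r^2))" by (simp add: complex_eq_iff cph sph)
  have cb: "cis \<beta> = P l 1"
    unfolding \<beta>_def P_def cis_mult[symmetric] cisA c1 by (simp only: r_def)
  have ca: "cis \<alpha> = P l (-1)"
    unfolding \<alpha>_def P_def diff_conv_add_uminus cis_mult[symmetric] cisA c2 by (simp only: r_def)
  have rne: "r \<noteq> 0" using r0 by simp
  have s0: "sqrt (1 - r^2) > 0" using r0 by (simp add: abs_square_less_1)
  have PPsum: "P l 1 + P l (-1) = 2 * l"
    unfolding P_def by (simp add: r_def[symmetric] complex_eq_iff) (use rne in \<open>simp add: add_divide_distrib[symmetric] algebra_simps\<close>)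
  have Pne: "P l 1 \<noteq> P l (-1)"
  proof
    assume "P l 1 = P l (-1)"
    then have "(l / cmod l) * Complex (cmod l) (sqrt (1 - (cmod l)^2)) = (l / cmod l) * Complex (cmod l) (- sqrt (1 - (cmod l)^2))"
      by (simp add: P_def)
    then have "Complex r (sqrt (1 - r^2)) = Complex r (- sqrt (1 - r^2))"
      using l0 by (simp add: r_def)
    then show False using s0 by simp
  qed
  have ab: "\<alpha> \<le> \<beta>" "\<beta> - \<alpha> < pi" using ph ph2 by (auto simp: \<alpha>_def \<beta>_def)
  define Set where "Set = {y. cmod y = 1 \<and> Re (y * cnj (P l 1 + P l (-1))) \<ge> (cmod (P l 1 + P l (-1)))^2 / 2}"
  have Seq: "Set = {y. cmod y = 1 \<and> Re (y * cnj l) \<ge> (cmod l)^2}"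
  proof -
    have a: "\<And>y. Re (y * cnj (2 * l)) = 2 * Re (y * cnj l)" by (simp add: algebra_simps)
    have b: "(cmod (2 * l))^2 / 2 = 2 * (cmod l)^2" by (simp add: norm_mult power_mult_distrib)
    have c: "\<And>X::real. 2 * (cmod l)^2 \<le> 2 * X \<longleftrightarrow> (cmod l)^2 \<le> X" by simp
    show ?thesis unfolding Set_def PPsum a b c ..
  qed
  have E: "bisector_ends l = {cis \<alpha>, cis \<beta>}" by (simp add: ends_eq[OF l0 l1] ca cb insert_commute)
  have main: "Iarc l = cis ` {\<alpha>..\<beta>}"
    unfolding Iarc_def
  proof (rule the_equality)
    show "\<exists>a b. a \<le> b \<and> b - a < pi \<and> {cis a, cis b} = bisector_ends l \<and> cis ` {\<alpha>..\<beta>} = cis ` {a..b}"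
      apply (rule exI[of _ \<alpha>], rule exI[of _ \<beta>]) using ab E by simp
  next
    fix I assume "\<exists>a b. a \<le> b \<and> b - a < pi \<and> {cis a, cis b} = bisector_ends l \<and> I = cis ` {a..b}"
    then obtain a b where h: "a \<le> b" "b - a < pi" "{cis a, cis b} = bisector_ends l" "I = cis ` {a..b}" by blast
    have "{cis a, cis b} = {P l 1, P l (-1)}" using h(3) ends_eq[OF l0 l1] by (simp only:)
    then have sab: "cis a + cis b = P l 1 + P l (-1)" by (rule pair_sum[OF _ Pne])
    have I: "I = Set" unfolding h(4) arc_set[OF h(1,2)] sab Set_def ..
    have sab2: "cis \<alpha> + cis \<beta> = P l 1 + P l (-1)" unfolding ca cb by (rule add.commute)
    have "cis ` {\<alpha>..\<beta>} = Set" unfolding arc_set[OF ab] sab2 Set_def ..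
    then show "I = cis ` {\<alpha>..\<beta>}" using I by simp
  qed
  then show "Iarc l = cis ` {Arg l - arccos (cmod l) .. Arg l + arccos (cmod l)}"
    by (simp add: \<alpha>_def \<beta>_def \<phi>_def r_def)
  have sab2: "cis \<alpha> + cis \<beta> = P l 1 + P l (-1)" unfolding ca cb by (rule add.commute)
  have "cis ` {\<alpha>..\<beta>} = Set" unfolding arc_set[OF ab] sab2 Set_def ..
  then show "Iarc l = {y. cmod y = 1 \<and> Re (y * cnj l) \<ge> (cmod l)^2}" using main Seq by simp
qed



lemma cis_eq_int:
  assumes "cis t = cis s"
  obtains n :: int where "t = s + 2 * pi * of_int n"
proof -
  have "exp (\<i> * complex_of_real t) = exp (\<i> * complex_of_real s)" using assms by (simp add: cis_conv_exp)
  then obtain n :: int where "\<i> * complex_of_real t = \<i> * complex_of_real s + (of_int (2 * n) * pi) * \<i>"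
    unfolding exp_eq by blast
  then have "Im (\<i> * complex_of_real t) = Im (\<i> * complex_of_real s + (of_int (2 * n) * pi) * \<i>)" by simp
  then have "t = s + 2 * pi * of_int n" by simp
  then show ?thesis by (rule that)
qed

lemma cis_shift: "cis (x + 2 * pi * of_int n) = cis x"
proof -
  have "cis (2 * pi * real_of_int n) = 1" by (rule cis_multiple_2pi) simp
  then show ?thesis by (simp add: cis_mult[symmetric])
qed

lemma arc_len_le:
  assumes ab: "a \<le> b" "b - a < 2 * pi"
  shows "arc_len (cis ` {a..b}) \<le> b - a"
proof -
  define n where "n = \<lfloor>a / (2 * pi)\<rfloor>"
  define a' where "a' = a - 2 * pi * of_int n"
  define b' where "b' = b - 2 * pi * of_int n"
  have "of_int n \<le> a / (2 * pi)" "a / (2 * pi) < of_int n + 1" unfolding n_def by linarith+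
  then have a'0: "0 \<le> a'" "a' < 2 * pi" unfolding a'_def by (auto simp: field_simps)
  have ab': "a' \<le> b'" "b' - a' < 2 * pi" "b' - a' = b - a" using ab by (auto simp: a'_def b'_def)
  have img: "cis ` {a..b} = cis ` {a'..b'}"
  proof -
    have "{a..b} = (\<lambda>x. x + 2 * pi * of_int n) ` {a'..b'}"
      unfolding a'_def b'_def by (simp add: image_add_atLeastAtMost' )
    then have "cis ` {a..b} = (\<lambda>x. cis (x + 2 * pi * of_int n)) ` {a'..b'}"
      by (simp only: image_image)
    then show ?thesis by (simp only: cis_shift)
  qed
  define T where "T = {t \<in> {0..<2*pi}. cis t \<in> cis ` {a'..b'}}"
  define A where "A = {a'..min b' (2*pi)}"
  define B where "B = {0..max 0 (b' - 2*pi)}"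
  have TAB: "T \<subseteq> A \<union> B"
  proof
    fix t assume "t \<in> T"
    then obtain s where t: "0 \<le> t" "t < 2 * pi" and s: "a' \<le> s" "s \<le> b'" and e: "cis t = cis s"
      unfolding T_def by auto
    obtain k :: int where k: "t = s + 2 * pi * of_int k" using cis_eq_int[OF e] by blast
    have "2 * pi * of_int k < 2 * pi * 1" using k t s a'0 by linarith
    then have k1: "k < 1" by simp
    have "2 * pi * (-2) < 2 * pi * of_int k" using k t s a'0 ab' by linarith
    then have "pi * (-2) < pi * of_int k" by simp
    then have "(-2::real) < of_int k" using mult_less_cancel_left_pos[OF pi_gt_zero] by blast
    then have k2: "-2 < k" by simp
    have "k = 0 \<or> k = -1" using k1 k2 by linarith
    then show "t \<in> A \<union> B"
    proof
      assume "k = 0" then show ?thesis using k t s by (auto simp: A_def)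
    next
      assume "k = -1" then show ?thesis using k t s by (auto simp: B_def)
    qed
  qed
  have AB: "A \<in> sets lborel" "B \<in> sets lborel" by (simp_all add: A_def B_def)
  have mAB: "measure lborel A + measure lborel B = b' - a'"
    using a'0 ab' by (simp add: A_def B_def)
  have "measure lborel T \<le> b' - a'"
  proof (cases "T \<in> sets lborel")
    case True
    have "A \<union> B \<in> fmeasurable lborel"
      unfolding A_def B_def by (intro fmeasurable.Un) (metis cbox_interval fmeasurable_cbox)+
    then have "measure lborel T \<le> measure lborel (A \<union> B)"
      using measure_mono_fmeasurable[OF TAB True] by blast
    also have "\<dots> \<le> measure lborel A + measure lborel B" using measure_Un_le AB by blast
    finally show ?thesis using mAB by simp
  next
    case False
    then show ?thesis using measure_notin_sets[OF False] ab' by simp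
  qed
  then show ?thesis unfolding arc_len_def img T_def[symmetric] using ab' by simp
qed



lemma good_props:
  assumes sub: "disk_subgroup G" and "l \<in> orbit0 G" and "Re (x * cnj l) > (cmod l)^2"
  shows "l \<noteq> 0" "cmod l < 1"
  using assms orbit0_disk[OF sub] by auto

lemma Iarc_dist:
  assumes "l \<noteq> 0" "cmod l < 1" "y \<in> Iarc l"
  shows "(cmod (y - l))^2 \<le> 1 - (cmod l)^2"
proof -
  have "cmod y = 1" "Re (y * cnj l) \<ge> (cmod l)^2" using assms Iarc_char(2)[OF assms(1,2)] by auto
  then show ?thesis using normsq_diff[of y l] by simp
qed

lemma sq_lt_imp: "(a::real)^2 < b^2 \<Longrightarrow> 0 \<le> b \<Longrightarrow> \<bar>a\<bar> < b"
proof -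
  assume "a^2 < b^2" "0 \<le> b"
  then have "\<bar>a\<bar>^2 < b^2" by simp
  then show "\<bar>a\<bar> < b" using \<open>0 \<le> b\<close> by (rule power2_less_imp_less)
qed

lemma Iarc_small:
  assumes "l \<noteq> 0" "cmod l < 1" "y \<in> Iarc l" "1 - (cmod l)^2 < e^2" "e > 0"
  shows "cmod (y - l) < e"
proof -
  have "(cmod (y - l))^2 < e^2" using Iarc_dist[OF assms(1-3)] assms(4) by simp
  then show ?thesis using sq_lt_imp[of "cmod (y - l)" e] assms(5) by simp
qed

lemma P_on_arc:
  assumes "l \<noteq> 0" "cmod l < 1"
  shows "P l 1 \<in> Iarc l" "Re (P l 1 * cnj l) = (cmod l)^2"
proof -
  have ll: "l * cnj l = complex_of_real ((cmod l)^2)" by (simp only: complex_norm_square)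
  have "P l 1 * cnj l = (l * cnj l) / complex_of_real (cmod l) * Complex (cmod l) (sqrt (1 - (cmod l)^2))"
    by (simp add: P_def)
  also have "\<dots> = complex_of_real (cmod l) * Complex (cmod l) (sqrt (1 - (cmod l)^2))"
    unfolding ll using assms by (simp add: power2_eq_square)
  finally show "Re (P l 1 * cnj l) = (cmod l)^2" by (simp add: power2_eq_square)
  then show "P l 1 \<in> Iarc l" using Iarc_char(2)[OF assms] P_norm[OF assms, of 1] by simp
qed

lemma step:
  assumes sub: "disk_subgroup G" and cc: "cocompact G" and x: "cmod x = 1"
    and lo: "l \<in> orbit0 G" and lx: "Re (x * cnj l) > (cmod l)^2" and e: "e > 0"
  shows "\<exists>l'. l' \<in> orbit0 G \<and> Re (x * cnj l') > (cmod l')^2 \<and> Iarc l' \<subset> Iarc l \<and> 1 - (cmod l')^2 < e"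
proof -
  note lp = good_props[OF sub lo lx]
  define g where "g = Re (x * cnj l) - (cmod l)^2"
  have g0: "g > 0" using lx by (simp add: g_def)
  obtain l' where l'o: "l' \<in> orbit0 G" and l'x: "Re (x * cnj l') > (cmod l')^2"
      and l'e: "1 - (cmod l')^2 < min e ((g/2)^2)"
  proof -
    have "min e ((g/2)^2) > 0" using e g0 by simp
    from key[OF cc sub x this] show ?thesis using that by blast
  qed
  note lp' = good_props[OF sub l'o l'x]
  have xin: "x \<in> Iarc l'" using Iarc_char(2)[OF lp'] x l'x by simp
  have l'e2: "1 - (cmod l')^2 < (g/2)^2" using l'e by simp
  have strict: "Re (y * cnj l) > (cmod l)^2" if y: "y \<in> Iarc l'" for y
  proof -
    have "cmod (y - l') < g/2" using Iarc_small[OF lp' y l'e2] g0 by simp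
    moreover have "cmod (x - l') < g/2" using Iarc_small[OF lp' xin l'e2] g0 by simp
    ultimately have yx: "cmod (y - x) < g"
      using norm_triangle_lt[of "y - l'" "l' - x" g] by (simp add: norm_minus_commute)
    have "Re ((y - x) * cnj l) \<ge> - cmod ((y - x) * cnj l)" using abs_Re_le_cmod[of "(y - x) * cnj l"] by linarith
    moreover have "cmod ((y - x) * cnj l) \<le> cmod (y - x)" using lp by (simp add: norm_mult mult_right_le_one_le)
    moreover have "Re (y * cnj l) = Re (x * cnj l) + Re ((y - x) * cnj l)" by (simp add: algebra_simps)
    ultimately show ?thesis using yx by (simp add: g_def)
  qed
  have sub1: "Iarc l' \<subseteq> Iarc l"
  proof
    fix y assume y: "y \<in> Iarc l'"
    then have "cmod y = 1" using Iarc_char(2)[OF lp'] by simp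
    then show "y \<in> Iarc l" using strict[OF y] Iarc_char(2)[OF lp] by simp
  qed
  have "P l 1 \<notin> Iarc l'"
  proof
    assume "P l 1 \<in> Iarc l'"
    from strict[OF this] show False using P_on_arc(2)[OF lp] by simp
  qed
  then have "Iarc l' \<subset> Iarc l" using sub1 P_on_arc(1)[OF lp] by blast
  then show ?thesis using l'o l'x l'e by auto
qed



lemma partA:
  assumes sub: "disk_subgroup G" and cc: "cocompact G" and x: "cmod x = 1"
  shows "\<exists>l :: nat \<Rightarrow> complex. (\<forall>k. l k \<in> orbit0 G - {0}) \<and>
            (\<forall>k. Iarc (l (Suc k)) \<subset> Iarc (l k)) \<and> (\<Inter>k. Iarc (l k)) = {x}"
proof -
  define good where "good = (\<lambda>l. l \<in> orbit0 G \<and> Re (x * cnj l) > (cmod l)^2)"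
  have "\<forall>k l. \<exists>l'. good l \<longrightarrow> good l' \<and> Iarc l' \<subset> Iarc l \<and> 1 - (cmod l')^2 < (1 / real (Suc k))^2"
  proof (intro allI)
    fix k l
    show "\<exists>l'. good l \<longrightarrow> good l' \<and> Iarc l' \<subset> Iarc l \<and> 1 - (cmod l')^2 < (1 / real (Suc k))^2"
    proof (cases "good l")
      case True
      then show ?thesis using step[OF sub cc x, of l "(1 / real (Suc k))^2"] by (auto simp: good_def)
    qed simp
  qed
  note ex = this
  define f where "f = (\<lambda>k l. SOME l'. good l \<longrightarrow> good l' \<and> Iarc l' \<subset> Iarc l \<and> 1 - (cmod l')^2 < (1 / real (Suc k))^2)"
  have f: "good (f k l) \<and> Iarc (f k l) \<subset> Iarc l \<and> 1 - (cmod (f k l))^2 < (1 / real (Suc k))^2" if "good l" for k l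
  proof -
    have "good l \<longrightarrow> good (f k l) \<and> Iarc (f k l) \<subset> Iarc l \<and> 1 - (cmod (f k l))^2 < (1 / real (Suc k))^2"
      unfolding f_def by (rule someI_ex) (use ex in blast)
    then show ?thesis using that by blast
  qed
  obtain l0 where l0: "good l0" using key[OF cc sub x, of 1] by (auto simp: good_def)
  define L where "L = rec_nat l0 f"
  have L0: "L 0 = l0" and LS: "\<And>k. L (Suc k) = f k (L k)" by (simp_all add: L_def)
  have gL: "good (L k)" for k
    by (induction k) (simp_all add: L0 l0 LS f)
  have props: "\<And>k. L k \<noteq> 0 \<and> cmod (L k) < 1" using gL good_props[OF sub] unfolding good_def by blast
  have xin: "x \<in> Iarc (L k)" for k
    using gL[of k] Iarc_char(2)[of "L k"] props[of k] x by (simp add: good_def)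
  have small: "1 - (cmod (L (Suc k)))^2 < (1 / real (Suc k))^2" for k using f[OF gL[of k]] LS by simp
  have "(\<Inter>k. Iarc (L k)) = {x}"
  proof
    show "{x} \<subseteq> (\<Inter>k. Iarc (L k))" using xin by blast
    show "(\<Inter>k. Iarc (L k)) \<subseteq> {x}"
    proof
      fix y assume y: "y \<in> (\<Inter>k. Iarc (L k))"
      show "y \<in> {x}"
      proof (rule ccontr)
        assume "y \<notin> {x}"
        then have d: "cmod (y - x) > 0" by simp
        obtain k where k: "inverse (real (Suc k)) < cmod (y - x) / 2" using reals_Archimedean[of "cmod (y - x) / 2"] d by auto
        have e: "1 / real (Suc k) > 0" by simp
        have "cmod (y - L (Suc k)) < 1 / real (Suc k)"
          using Iarc_small[of "L (Suc k)" y] props y small e by blast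
        moreover have "cmod (x - L (Suc k)) < 1 / real (Suc k)"
          using Iarc_small[of "L (Suc k)" x] props xin small e by blast
        ultimately have "cmod (y - x) < 2 * (1 / real (Suc k))"
          using norm_triangle_lt[of "y - L (Suc k)" "L (Suc k) - x"] by (simp add: norm_minus_commute)
        then show False using k by (simp add: field_simps)
      qed
    qed
  qed
  moreover have "\<forall>k. L k \<in> orbit0 G - {0}" using gL props by (simp add: good_def)
  moreover have "\<forall>k. Iarc (L (Suc k)) \<subset> Iarc (L k)" using f gL LS by simp
  ultimately show ?thesis by blast
qed

lemma partB:
  assumes sub: "disk_subgroup G" and cc: "cocompact G" and J: "circle_interval J" and eps: "\<epsilon> > 0"
  shows "\<exists>F. finite F \<and> F \<subseteq> Iarc ` (orbit0 G - {0}) \<and> J \<subseteq> \<Union>F \<and> (\<forall>I\<in>F. arc_len I \<le> \<epsilon>)"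
proof -
  have Jsub: "J \<subseteq> sphere 0 1"
  proof
    fix z assume "z \<in> J"
    then obtain t where "z = cis t" using J unfolding circle_interval_def by blast
    then show "z \<in> sphere 0 1" by simp
  qed
  define e0 where "e0 = min (\<epsilon> / 2) 1"
  have e0: "0 < e0" "e0 \<le> 1" "e0 \<le> \<epsilon> / 2" using eps by (auto simp: e0_def)
  have "1 < pi / 2" using pi_gt3 by simp
  then have e0pi: "e0 < pi / 2" using e0 by linarith
  define c0 where "c0 = cos e0"
  have c0: "0 < c0" "c0 < 1"
  proof -
    show "0 < c0" unfolding c0_def using e0 e0pi by (intro cos_gt_zero_pi) auto
    have "cos e0 < cos 0" using e0 e0pi by (intro cos_monotone_0_pi) auto
    then show "c0 < 1" by (simp add: c0_def)
  qed
  have eta: "1 - c0^2 > 0" using c0 by (simp add: abs_square_less_1)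
  have "\<forall>y\<in>sphere 0 1. \<exists>l. l \<in> orbit0 G \<and> Re (y * cnj l) > (cmod l)^2 \<and> 1 - (cmod l)^2 < 1 - c0^2"
  proof
    fix y :: complex assume "y \<in> sphere 0 1"
    then have "cmod y = 1" by simp
    from key[OF cc sub this eta] show "\<exists>l. l \<in> orbit0 G \<and> Re (y * cnj l) > (cmod l)^2 \<and> 1 - (cmod l)^2 < 1 - c0^2"
      by blast
  qed
  then obtain L where L0: "\<forall>y\<in>sphere 0 1. L y \<in> orbit0 G \<and> Re (y * cnj (L y)) > (cmod (L y))^2 \<and> 1 - (cmod (L y))^2 < 1 - c0^2"
    by (rule bchoice[THEN exE])
  then have L: "\<And>y. y \<in> sphere 0 1 \<Longrightarrow> L y \<in> orbit0 G \<and> Re (y * cnj (L y)) > (cmod (L y))^2 \<and> 1 - (cmod (L y))^2 < 1 - c0^2"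
    by blast
  have Lp: "L y \<noteq> 0 \<and> cmod (L y) < 1" if "y \<in> sphere 0 1" for y using good_props[OF sub] L[OF that] by blast
  have Lc: "cmod (L y) > c0" if "y \<in> sphere 0 1" for y
  proof -
    have "c0^2 < (cmod (L y))^2" using L[OF that] by simp
    then show ?thesis by (rule power2_less_imp_less[OF _ norm_ge_zero])
  qed
  have len: "arc_len (Iarc (L y)) \<le> \<epsilon>" if y: "y \<in> sphere 0 1" for y
  proof -
    define r where "r = cmod (L y)"
    have r: "c0 < r" "r < 1" using Lc[OF y] Lp[OF y] by (auto simp: r_def)
    have phi: "0 \<le> arccos r" "arccos r < pi" using arccos_lt_bounded[of r] r c0 by auto
    have "arc_len (Iarc (L y)) \<le> 2 * arccos r"
      using arc_len_le[of "Arg (L y) - arccos r" "Arg (L y) + arccos r"] phi Iarc_char(1)[of "L y"] Lp[OF y]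
      by (simp add: r_def)
    also have "arccos r \<le> arccos c0" using r c0 arccos_le_mono[of r c0] by simp
    also have "arccos c0 = e0" unfolding c0_def using e0 e0pi by (intro arccos_cos) auto
    finally show ?thesis using e0 by simp
  qed
  define U where "U = (\<lambda>y. {z. Re (z * cnj (L y)) > (cmod (L y))^2})"
  have opn: "\<And>y. y \<in> sphere 0 1 \<Longrightarrow> open (U y)"
    unfolding U_def by (intro open_Collect_less continuous_intros)
  have cov: "sphere 0 1 \<subseteq> (\<Union>y\<in>sphere 0 1. U y)" using L by (auto simp: U_def)
  obtain C where C: "C \<subseteq> sphere 0 1" "finite C" "sphere 0 1 \<subseteq> (\<Union>y\<in>C. U y)"
    using compactE_image[OF compact_sphere opn cov] by blast
  define F where "F = (\<lambda>y. Iarc (L y)) ` C"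
  have "finite F" using C by (simp add: F_def)
  moreover have "F \<subseteq> Iarc ` (orbit0 G - {0})" using C L Lp by (auto simp: F_def)
  moreover have "J \<subseteq> \<Union>F"
  proof
    fix z assume "z \<in> J"
    then have z: "z \<in> sphere 0 1" using Jsub by blast
    then obtain y where y: "y \<in> C" "z \<in> U y" using C(3) by blast
    have "y \<in> sphere 0 1" using y C by blast
    then have "z \<in> Iarc (L y)" using Iarc_char(2)[of "L y"] Lp y z by (simp add: U_def)
    then show "z \<in> \<Union>F" using y by (auto simp: F_def)
  qed
  moreover have "\<forall>I\<in>F. arc_len I \<le> \<epsilon>" using len C by (auto simp: F_def)
  ultimately show ?thesis by blast
qed


theorem lemma8:
  fixes \<Gamma> :: "(complex \<times> complex) set"
  assumes "fuchsian \<Gamma>" and "cocompact \<Gamma>" and "torsion_free \<Gamma>"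
  shows "(\<forall>x\<in>sphere 0 1. \<exists>l :: nat \<Rightarrow> complex.
            (\<forall>k. l k \<in> orbit0 \<Gamma> - {0}) \<and>
            (\<forall>k. Iarc (l (Suc k)) \<subset> Iarc (l k)) \<and>
            (\<Inter>k. Iarc (l k)) = {x})
       \<and> (\<forall>J \<epsilon>. circle_interval J \<and> \<epsilon> > 0 \<longrightarrow>
            (\<exists>F. finite F \<and> F \<subseteq> Iarc ` (orbit0 \<Gamma> - {0}) \<and> J \<subseteq> \<Union>F \<and>
                 (\<forall>I\<in>F. arc_len I \<le> \<epsilon>)))"
proof -
  have sub: "disk_subgroup \<Gamma>" using assms(1) by (simp add: fuchsian_def)
  show ?thesis
    using partA[OF sub assms(2)] partB[OF sub assms(2)] by simp
qed

end
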